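(* For an $L$-layer LISTA network with Gaussian initialization $\mathbf W_0=(\mathbf W_{10},\mathbf W_{20})$ (i.i.d. $\mathcal N(0,1)$ entries) and any weights $\mathbf W_1,\mathbf W_2$ with $\|\mathbf W_1-\mathbf W_{10}\|\le R_1$, $\|\mathbf W_2-\mathbf W_{20}\|\le R_2$, we have for every $s\in[m]$ $$\|\mathbf b_s^l-\mathbf b^l_{s,0}\|=\tilde O(1/\sqrt m)\quad\forall\,l\in[L-1].$$
   Context: Fix $\lambda>0$ and $\sigma(x)=\log(1+e^{x-\lambda})-\log(1+e^{-x-\lambda})$ (componentwise), $L_\sigma$-Lipschitz and $\beta_\sigma$-smooth. LISTA: input $\mathbf y\in\mathbb R^n$ with $|y_i|\le C_y$, initial $\mathbf x^0$ with $|x^0_i|\le C_x$, $\mathbf x^l=\sigma\big(\frac1{\sqrt n}W_1^l\mathbf y+\frac1{\sqrt m}W_2^l\mathbf x^{l-1}\big)$, $W_1^l\in\mathbb R^{m\times n}$, $W_2^l\in\mathbb R^{m\times m}$, output $\mathbf f=\frac1{\sqrt m}\mathbf x^L$, $f_s$ its $s$-th entry. $\mathbf b^l_s=\partial f_s/\partial\mathbf x^l$ at weights $\mathbf W=(\mathbf W_1,\mathbf W_2)$, $\mathbf b^l_{s,0}$ the same at $\mathbf W_0$. Weight distances are Frobenius norms over all entries; $\|\cdot\|$ on vectors is Euclidean. $\tilde O$ is with respect to $m$ (suppressing logarithmic factors), holding with high probability over the initialization. *)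

theory Defs
  imports "HOL-Probability.Probability"
begin

text \<open>Soft-thresholding-like activation sigma (componentwise).\<close>
definition lista_sigma :: "real \<Rightarrow> real \<Rightarrow> real" where
  "lista_sigma lam x = ln (1 + exp (x - lam)) - ln (1 + exp (- x - lam))"

text \<open>Weights: W1 l i j (layer l, row i < m, column j < n), W2 l i j (row i < m, column j < m).
  Vectors are functions nat => real, only the first n resp. m entries matter.\<close>

definition lista_step ::
  "real \<Rightarrow> nat \<Rightarrow> nat \<Rightarrow> (nat \<Rightarrow> nat \<Rightarrow> nat \<Rightarrow> real) \<Rightarrow> (nat \<Rightarrow> nat \<Rightarrow> nat \<Rightarrow> real)
    \<Rightarrow> (nat \<Rightarrow> real) \<Rightarrow> nat \<Rightarrow> (nat \<Rightarrow> real) \<Rightarrow> (nat \<Rightarrow> real)" where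
  "lista_step lam n m W1 W2 y l x = (\<lambda>i. lista_sigma lam
      ((1 / sqrt (real n)) * (\<Sum>j<n. W1 l i j * y j) + (1 / sqrt (real m)) * (\<Sum>j<m. W2 l i j * x j)))"

fun lista_from ::
  "real \<Rightarrow> nat \<Rightarrow> nat \<Rightarrow> (nat \<Rightarrow> nat \<Rightarrow> nat \<Rightarrow> real) \<Rightarrow> (nat \<Rightarrow> nat \<Rightarrow> nat \<Rightarrow> real)
    \<Rightarrow> (nat \<Rightarrow> real) \<Rightarrow> nat \<Rightarrow> (nat \<Rightarrow> real) \<Rightarrow> nat \<Rightarrow> (nat \<Rightarrow> real)" where
  "lista_from lam n m W1 W2 y l x 0 = x"
| "lista_from lam n m W1 W2 y l x (Suc k) =
     lista_step lam n m W1 W2 y (l + Suc k) (lista_from lam n m W1 W2 y l x k)"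

definition lista_x where
  "lista_x lam n m W1 W2 y x0 l = lista_from lam n m W1 W2 y 0 x0 l"

definition lista_out_from where
  "lista_out_from lam n m L W1 W2 y l x s = (1 / sqrt (real m)) * lista_from lam n m W1 W2 y l x (L - l) s"

text \<open>b^l_s = partial f_s / partial x^l, evaluated at the actual x^l; entry j.\<close>
definition lista_b where
  "lista_b lam n m L W1 W2 y x0 l s j =
     (let xl = lista_x lam n m W1 W2 y x0 l in
      deriv (\<lambda>t. lista_out_from lam n m L W1 W2 y l (xl(j := t)) s) (xl j))"

text \<open>Index set of all initialization entries (True: W1-entries, False: W2-entries), layers 1..L.\<close>
definition init_index :: "nat \<Rightarrow> nat \<Rightarrow> nat \<Rightarrow> (bool \<times> nat \<times> nat \<times> nat) set" where
  "init_index L n m =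
     {(True, l, i, j) | l i j. l \<in> {1..L} \<and> i < m \<and> j < n} \<union>
     {(False, l, i, j) | l i j. l \<in> {1..L} \<and> i < m \<and> j < m}"

definition init_measure :: "nat \<Rightarrow> nat \<Rightarrow> nat \<Rightarrow> (bool \<times> nat \<times> nat \<times> nat \<Rightarrow> real) measure" where
  "init_measure L n m = PiM (init_index L n m) (\<lambda>_. density lborel std_normal_density)"

definition W1_of :: "(bool \<times> nat \<times> nat \<times> nat \<Rightarrow> real) \<Rightarrow> nat \<Rightarrow> nat \<Rightarrow> nat \<Rightarrow> real" where
  "W1_of g l i j = g (True, l, i, j)"
definition W2_of :: "(bool \<times> nat \<times> nat \<times> nat \<Rightarrow> real) \<Rightarrow> nat \<Rightarrow> nat \<Rightarrow> nat \<Rightarrow> real" where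
  "W2_of g l i j = g (False, l, i, j)"

definition dist_W1 :: "nat \<Rightarrow> nat \<Rightarrow> nat \<Rightarrow> (nat \<Rightarrow> nat \<Rightarrow> nat \<Rightarrow> real) \<Rightarrow> (nat \<Rightarrow> nat \<Rightarrow> nat \<Rightarrow> real) \<Rightarrow> real" where
  "dist_W1 L n m A B = sqrt (\<Sum>l\<in>{1..L}. \<Sum>i<m. \<Sum>j<n. (A l i j - B l i j)\<^sup>2)"
definition dist_W2 :: "nat \<Rightarrow> nat \<Rightarrow> (nat \<Rightarrow> nat \<Rightarrow> nat \<Rightarrow> real) \<Rightarrow> (nat \<Rightarrow> nat \<Rightarrow> nat \<Rightarrow> real) \<Rightarrow> real" where
  "dist_W2 L m A B = sqrt (\<Sum>l\<in>{1..L}. \<Sum>i<m. \<Sum>j<m. (A l i j - B l i j)\<^sup>2)"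

definition vec_dist :: "nat \<Rightarrow> (nat \<Rightarrow> real) \<Rightarrow> (nat \<Rightarrow> real) \<Rightarrow> real" where
  "vec_dist m u v = sqrt (\<Sum>j<m. (u j - v j)\<^sup>2)"

end

theory Submission
  imports Defs
begin


definition dsig :: "real \<Rightarrow> real \<Rightarrow> real" where
  "dsig lam x = exp (x - lam) / (1 + exp (x - lam)) + exp (- x - lam) / (1 + exp (- x - lam))"

lemma sigma_deriv: "(lista_sigma lam has_real_derivative dsig lam x) (at x)"
proof -
  have "((\<lambda>x. ln (1 + exp (x - lam)) - ln (1 + exp (- x - lam))) has_real_derivative
     (1 / (1 + exp (x - lam)) * (exp (x - lam) * (1 - 0))) - (1 / (1 + exp (- x - lam))) * (exp (- x - lam) * (- 1 - 0))) (at x)"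
    by (rule derivative_eq_intros refl | simp add: add_pos_pos)+
  then show ?thesis unfolding lista_sigma_def[abs_def] dsig_def by simp
qed

lemma dsig_bound: assumes "lam \<ge> 0" shows "0 \<le> dsig lam x" "dsig lam x \<le> 1"
proof -
  define a where "a = exp (x - lam)"
  define b where "b = exp (- x - lam)"
  have a: "a > 0" and b: "b > 0" unfolding a_def b_def by auto
  have "a * b = exp (- 2 * lam)" unfolding a_def b_def by (simp add: exp_add[symmetric])
  also have "\<dots> \<le> 1" using assms by simp
  finally have ab: "a * b \<le> 1" .
  have d: "dsig lam x = a / (1 + a) + b / (1 + b)" unfolding dsig_def a_def b_def by simp
  show "0 \<le> dsig lam x" using a b d by simp
  have "a / (1 + a) + b / (1 + b) = (a + b + 2 * a * b) / ((1 + a) * (1 + b))"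
    using a b by (simp add: field_simps)
  also have "\<dots> \<le> 1"
  proof -
    have "0 < (1 + a) * (1 + b)" using a b by simp
    moreover have "a + b + 2 * a * b \<le> (1 + a) * (1 + b)" using ab by (simp add: algebra_simps)
    ultimately show ?thesis by simp
  qed
  finally show "dsig lam x \<le> 1" using d by simp
qed

definition zz where
  "zz n m W1 W2 y k x i = (1 / sqrt (real n)) * (\<Sum>j<n. W1 k i j * y j) + (1 / sqrt (real m)) * (\<Sum>j<m. W2 k i j * x j)"

fun Gk :: "real \<Rightarrow> nat \<Rightarrow> nat \<Rightarrow> (nat \<Rightarrow> nat \<Rightarrow> nat \<Rightarrow> real) \<Rightarrow> (nat \<Rightarrow> nat \<Rightarrow> nat \<Rightarrow> real)
    \<Rightarrow> (nat \<Rightarrow> real) \<Rightarrow> nat \<Rightarrow> (nat \<Rightarrow> real) \<Rightarrow> nat \<Rightarrow> (nat \<Rightarrow> real) \<Rightarrow> (nat \<Rightarrow> real)" where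
  "Gk lam n m W1 W2 y l xl 0 v = v"
| "Gk lam n m W1 W2 y l xl (Suc k) v = (\<lambda>i. dsig lam (zz n m W1 W2 y (l + Suc k) (lista_from lam n m W1 W2 y l xl k) i)
      * ((1 / sqrt (real m)) * (\<Sum>j<m. W2 (l + Suc k) i j * Gk lam n m W1 W2 y l xl k v j)))"

lemma step_zz: "lista_step lam n m W1 W2 y k x i = lista_sigma lam (zz n m W1 W2 y k x i)"
  unfolding lista_step_def zz_def by simp

lemma deriv_from:
  "((\<lambda>t. lista_from lam n m W1 W2 y l (xl(j := t)) k i) has_real_derivative
     Gk lam n m W1 W2 y l xl k (\<lambda>i. if i = j then 1 else 0) i) (at (xl j))"
proof (induction k arbitrary: i)
  case 0
  then show ?case by (cases "i = j") auto
next
  case (Suc k)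
  have inner: "((\<lambda>t. zz n m W1 W2 y (l + Suc k) (lista_from lam n m W1 W2 y l (xl(j := t)) k) i) has_real_derivative
     (0 + (1 / sqrt (real m)) * (\<Sum>j'<m. W2 (l + Suc k) i j' * Gk lam n m W1 W2 y l xl k (\<lambda>i. if i = j then 1 else 0) j'))) (at (xl j))"
  proof -
    have s: "((\<lambda>t. \<Sum>j'<m. W2 (l + Suc k) i j' * lista_from lam n m W1 W2 y l (xl(j := t)) k j') has_real_derivative
      (\<Sum>j'<m. W2 (l + Suc k) i j' * Gk lam n m W1 W2 y l xl k (\<lambda>i. if i = j then 1 else 0) j')) (at (xl j))"
      by (rule DERIV_sum) (rule DERIV_cmult, rule Suc.IH)
    show ?thesis unfolding zz_def by (rule DERIV_add[OF DERIV_const DERIV_cmult[OF s]])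
  qed
  have eq: "zz n m W1 W2 y (l + Suc k) (lista_from lam n m W1 W2 y l (xl(j := xl j)) k) i
      = zz n m W1 W2 y (l + Suc k) (lista_from lam n m W1 W2 y l xl k) i" by simp
  have "((\<lambda>t. lista_sigma lam (zz n m W1 W2 y (l + Suc k) (lista_from lam n m W1 W2 y l (xl(j := t)) k) i)) has_real_derivative
     dsig lam (zz n m W1 W2 y (l + Suc k) (lista_from lam n m W1 W2 y l xl k) i) *
     (0 + (1 / sqrt (real m)) * (\<Sum>j'<m. W2 (l + Suc k) i j' * Gk lam n m W1 W2 y l xl k (\<lambda>i. if i = j then 1 else 0) j'))) (at (xl j))"
    using DERIV_chain'[OF inner sigma_deriv] eq by simp
  then show ?case unfolding lista_from.simps Gk.simps step_zz by (simp only: add_0_left)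
qed

lemma lista_b_eq:
  "lista_b lam n m L W1 W2 y x0 l s j =
    (1 / sqrt (real m)) * Gk lam n m W1 W2 y l (lista_x lam n m W1 W2 y x0 l) (L - l) (\<lambda>i. if i = j then 1 else 0) s"
  unfolding lista_b_def Let_def lista_out_from_def
  by (intro DERIV_imp_deriv DERIV_cmult deriv_from)



definition opb :: "nat \<Rightarrow> (nat \<Rightarrow> nat \<Rightarrow> real) \<Rightarrow> real \<Rightarrow> bool" where
  "opb m W B \<longleftrightarrow> (\<forall>v. L2_set (\<lambda>i. \<Sum>j<m. W i j * v j) {..<m} \<le> B * L2_set v {..<m})"

lemma L2_set_abs: "L2_set (\<lambda>i. \<bar>f i\<bar>) A = L2_set f A"
  unfolding L2_set_def by simp

lemma abs_le_L2_set: "finite A \<Longrightarrow> i \<in> A \<Longrightarrow> \<bar>f i\<bar> \<le> L2_set f A"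
  using member_le_L2_set[of A i "\<lambda>i. \<bar>f i\<bar>"] by (simp add: L2_set_abs)

lemma L2_set_sq: "(L2_set f A)\<^sup>2 = (\<Sum>i\<in>A. (f i)\<^sup>2)"
  unfolding L2_set_def by (simp add: sum_nonneg)

lemma swap_helper:
  "(\<Sum>j\<in>A. c j * (d * (e * (\<Sum>j'\<in>B. a j' * (g j j' :: real))))) = d * (e * (\<Sum>j'\<in>B. a j' * (\<Sum>j\<in>A. c j * g j j')))"
proof -
  have "(\<Sum>j\<in>A. c j * (d * (e * (\<Sum>j'\<in>B. a j' * g j j')))) = (\<Sum>j\<in>A. \<Sum>j'\<in>B. d * (e * (a j' * (c j * g j j'))))"
    by (simp only: sum_distrib_left, simp only: mult_ac)
  also have "\<dots> = (\<Sum>j'\<in>B. \<Sum>j\<in>A. d * (e * (a j' * (c j * g j j'))))" by (rule sum.swap)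
  also have "\<dots> = d * (e * (\<Sum>j'\<in>B. a j' * (\<Sum>j\<in>A. c j * g j j')))"
    by (simp add: sum_distrib_left)
  finally show ?thesis .
qed

lemma Gk_lin:
  "(\<Sum>j<m. c j * Gk lam n m W1 W2 y l xl k (\<lambda>i. if i = j then 1 else 0) i)
    = Gk lam n m W1 W2 y l xl k (\<lambda>j. if j < m then c j else 0) i"
proof (induction k arbitrary: i)
  case 0
  then show ?case by (auto simp: if_distrib cong: if_cong)
next
  case (Suc k)
  have "(\<Sum>j<m. c j * Gk lam n m W1 W2 y l xl (Suc k) (\<lambda>i. if i = j then 1 else 0) i)
    = dsig lam (zz n m W1 W2 y (l + Suc k) (lista_from lam n m W1 W2 y l xl k) i) * ((1 / sqrt (real m)) *
       (\<Sum>j'<m. W2 (l + Suc k) i j' * (\<Sum>j<m. c j * Gk lam n m W1 W2 y l xl k (\<lambda>i. if i = j then 1 else 0) j')))"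
    unfolding Gk.simps by (simp only: swap_helper)
  also have "\<dots> = Gk lam n m W1 W2 y l xl (Suc k) (\<lambda>j. if j < m then c j else 0) i"
    by (simp add: Suc.IH)
  finally show ?case .
qed

lemma Gk_norm:
  assumes lam: "lam \<ge> 0" and m: "m > 0" and B: "B \<ge> 0"
    and op: "\<And>k'. k' \<in> {l+1..l+k} \<Longrightarrow> opb m (W2 k') B"
  shows "L2_set (Gk lam n m W1 W2 y l xl k v) {..<m} \<le> (B / sqrt (real m)) ^ k * L2_set v {..<m}"
  using op
proof (induction k)
  case 0
  then show ?case by simp
next
  case (Suc k)
  let ?g = "Gk lam n m W1 W2 y l xl k v"
  let ?W = "W2 (l + Suc k)"
  have IH: "L2_set ?g {..<m} \<le> (B / sqrt (real m)) ^ k * L2_set v {..<m}"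
    using Suc.prems by (intro Suc.IH) auto
  have opk: "opb m ?W B" using Suc.prems by auto
  have "L2_set (Gk lam n m W1 W2 y l xl (Suc k) v) {..<m}
      = L2_set (\<lambda>i. \<bar>Gk lam n m W1 W2 y l xl (Suc k) v i\<bar>) {..<m}" by (simp only: L2_set_abs)
  also have "\<dots> \<le> L2_set (\<lambda>i. 1 / sqrt (real m) * \<bar>\<Sum>j<m. ?W i j * ?g j\<bar>) {..<m}"
  proof (rule L2_set_mono)
    fix i
    have d: "0 \<le> dsig lam (zz n m W1 W2 y (l + Suc k) (lista_from lam n m W1 W2 y l xl k) i)"
       "dsig lam (zz n m W1 W2 y (l + Suc k) (lista_from lam n m W1 W2 y l xl k) i) \<le> 1"
      using dsig_bound[OF lam] by auto
    show "\<bar>Gk lam n m W1 W2 y l xl (Suc k) v i\<bar> \<le> 1 / sqrt (real m) * \<bar>\<Sum>j<m. ?W i j * ?g j\<bar>"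
      using d by (simp add: abs_mult) (rule divide_right_mono[OF mult_left_le_one_le]; simp)
  qed auto
  also have "\<dots> = 1 / sqrt (real m) * L2_set (\<lambda>i. \<Sum>j<m. ?W i j * ?g j) {..<m}"
    by (subst L2_set_right_distrib[symmetric]) (auto simp: L2_set_abs)
  also have "\<dots> \<le> 1 / sqrt (real m) * (B * L2_set ?g {..<m})"
    using opk unfolding opb_def by (intro mult_left_mono) auto
  also have "\<dots> \<le> 1 / sqrt (real m) * (B * ((B / sqrt (real m)) ^ k * L2_set v {..<m}))"
    using IH B by (intro mult_left_mono) auto
  also have "\<dots> = (B / sqrt (real m)) ^ Suc k * L2_set v {..<m}" by simp
  finally show ?case .
qed

lemma b_norm:
  assumes lam: "lam \<ge> 0" and m: "m > 0" and B: "B \<ge> 0" and s: "s < m" and l: "l \<le> L"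
    and op: "\<And>k'. k' \<in> {l+1..L} \<Longrightarrow> opb m (W2 k') B"
  shows "L2_set (lista_b lam n m L W1 W2 y x0 l s) {..<m} \<le> (B / sqrt (real m)) ^ (L - l) / sqrt (real m)"
proof -
  let ?xl = "lista_x lam n m W1 W2 y x0 l"
  let ?b = "lista_b lam n m L W1 W2 y x0 l s"
  let ?P = "(B / sqrt (real m)) ^ (L - l)"
  let ?G = "Gk lam n m W1 W2 y l ?xl (L - l)"
  let ?b' = "\<lambda>j. if j < m then ?b j else 0"
  have beq: "?b j = (1 / sqrt (real m)) * ?G (\<lambda>i. if i = j then 1 else 0) s" for j
    by (rule lista_b_eq)
  have "(L2_set ?b {..<m})\<^sup>2 = (\<Sum>j<m. ?b j * ?b j)" unfolding L2_set_sq by (simp add: power2_eq_square)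
  also have "\<dots> = (1 / sqrt (real m)) * (\<Sum>j<m. ?b j * ?G (\<lambda>i. if i = j then 1 else 0) s)"
    unfolding sum_distrib_left by (rule sum.cong[OF refl]) (subst (2) beq, simp)
  also have "\<dots> = (1 / sqrt (real m)) * ?G ?b' s" by (simp add: Gk_lin)
  also have "\<dots> \<le> (1 / sqrt (real m)) * L2_set (?G ?b') {..<m}"
    using s by (intro mult_left_mono order_trans[OF abs_ge_self abs_le_L2_set]) auto
  also have "\<dots> \<le> (1 / sqrt (real m)) * (?P * L2_set ?b' {..<m})"
    using op l by (intro mult_left_mono Gk_norm[OF lam m B]) auto
  also have "L2_set ?b' {..<m} = L2_set ?b {..<m}" by (rule L2_set_cong) auto
  finally have sq: "(L2_set ?b {..<m})\<^sup>2 \<le> (1 / sqrt (real m)) * ?P * L2_set ?b {..<m}" by simp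
  show ?thesis
  proof (cases "L2_set ?b {..<m} = 0")
    case True
    then show ?thesis using B by simp
  next
    case False
    define t where "t = L2_set ?b {..<m}"
    have pos: "t > 0" using False L2_set_nonneg[of ?b "{..<m}"] unfolding t_def by linarith
    from sq have "t * t \<le> (?P / sqrt (real m)) * t"
      unfolding t_def[symmetric] by (simp add: power2_eq_square)
    then have "t \<le> ?P / sqrt (real m)" using pos by (rule mult_right_le_imp_le)
    then show ?thesis unfolding t_def .
  qed
qed



definition bil :: "nat \<Rightarrow> (nat \<Rightarrow> nat \<Rightarrow> real) \<Rightarrow> (nat \<Rightarrow> real) \<Rightarrow> (nat \<Rightarrow> real) \<Rightarrow> real" where
  "bil m G u v = (\<Sum>i<m. \<Sum>j<m. u i * G i j * v j)"

definition hh :: "nat \<Rightarrow> real" where "hh m = 1 / (4 * sqrt (real m))"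

definition grid :: "nat \<Rightarrow> (nat \<Rightarrow> real) set" where
  "grid m = PiE {..<m} (\<lambda>_. (\<lambda>k. real_of_int k * hh m) ` {-(4 * int m + 1)..4 * int m + 1})"

definition rd :: "nat \<Rightarrow> (nat \<Rightarrow> real) \<Rightarrow> (nat \<Rightarrow> real)" where
  "rd m v = restrict (\<lambda>j. real_of_int \<lfloor>v j / hh m\<rfloor> * hh m) {..<m}"

abbreviation nrm :: "nat \<Rightarrow> (nat \<Rightarrow> real) \<Rightarrow> real" where "nrm m v \<equiv> L2_set v {..<m}"

lemma bil_diff1: "bil m G (\<lambda>i. u i - w i) v = bil m G u v - bil m G w v"
  unfolding bil_def by (simp add: algebra_simps sum_subtractf)

lemma bil_diff2: "bil m G u (\<lambda>i. v i - w i) = bil m G u v - bil m G u w"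
  unfolding bil_def by (simp add: algebra_simps sum_subtractf)

lemma bil_scale1: "bil m G (\<lambda>i. a * u i) v = a * bil m G u v"
  unfolding bil_def by (simp add: sum_distrib_left mult.assoc)

lemma bil_scale2: "bil m G u (\<lambda>i. a * v i) = a * bil m G u v"
  unfolding bil_def by (simp add: sum_distrib_left mult_ac)

lemma bil_cong: "(\<And>i. i < m \<Longrightarrow> u i = u' i) \<Longrightarrow> (\<And>j. j < m \<Longrightarrow> v j = v' j) \<Longrightarrow> bil m G u v = bil m G u' v'"
  unfolding bil_def by (intro sum.cong) auto

lemma bil_row: "bil m G u v = (\<Sum>i<m. u i * (\<Sum>j<m. G i j * v j))"
  unfolding bil_def by (simp add: sum_distrib_left mult.assoc)

lemma nrm_zero: "nrm m u = 0 \<Longrightarrow> i < m \<Longrightarrow> u i = 0"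
  by (simp add: L2_set_eq_0_iff)

lemma bil_frob: "bil m G u v \<le> sqrt (\<Sum>i<m. \<Sum>j<m. (G i j)\<^sup>2) * nrm m u * nrm m v"
proof -
  let ?w = "\<lambda>i. \<Sum>j<m. G i j * v j"
  have wi: "\<bar>?w i\<bar> \<le> L2_set (G i) {..<m} * nrm m v" for i
  proof -
    have "\<bar>?w i\<bar> \<le> (\<Sum>j<m. \<bar>G i j\<bar> * \<bar>v j\<bar>)"
      by (rule order_trans[OF sum_abs]) (simp add: abs_mult)
    also have "\<dots> \<le> L2_set (G i) {..<m} * nrm m v" by (rule L2_set_mult_ineq)
    finally show ?thesis .
  qed
  have "bil m G u v \<le> (\<Sum>i<m. \<bar>u i\<bar> * \<bar>?w i\<bar>)"
    unfolding bil_row by (rule sum_mono) (simp add: abs_mult[symmetric])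
  also have "\<dots> \<le> nrm m u * nrm m ?w" by (rule L2_set_mult_ineq)
  finally have A: "bil m G u v \<le> nrm m u * nrm m ?w" .
  have "nrm m ?w \<le> L2_set (\<lambda>i. L2_set (G i) {..<m} * nrm m v) {..<m}"
    by (subst L2_set_abs[symmetric]) (rule L2_set_mono, use wi in auto)
  also have "\<dots> = L2_set (\<lambda>i. L2_set (G i) {..<m}) {..<m} * nrm m v"
    by (simp add: L2_set_left_distrib)
  also have "L2_set (\<lambda>i. L2_set (G i) {..<m}) {..<m} = sqrt (\<Sum>i<m. \<Sum>j<m. (G i j)\<^sup>2)"
    unfolding L2_set_def by (simp add: sum_nonneg)
  finally have "nrm m ?w \<le> sqrt (\<Sum>i<m. \<Sum>j<m. (G i j)\<^sup>2) * nrm m v" .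
  then have "nrm m u * nrm m ?w \<le> nrm m u * (sqrt (\<Sum>i<m. \<Sum>j<m. (G i j)\<^sup>2) * nrm m v)"
    by (intro mult_left_mono) auto
  with A show ?thesis by (simp add: mult_ac)
qed

lemma nrm_scale: "r \<ge> 0 \<Longrightarrow> nrm m (\<lambda>i. r * u i) = r * nrm m u"
  by (simp add: L2_set_right_distrib)

lemma hh_pos: "m > 0 \<Longrightarrow> hh m > 0"
  unfolding hh_def by simp

lemma rd_props:
  assumes m: "m > 0" and v: "nrm m v \<le> 1"
  shows "rd m v \<in> grid m" "nrm m (\<lambda>j. v j - rd m v j) \<le> 1 / 4" "nrm m (rd m v) \<le> 5 / 4"
proof -
  have h: "hh m > 0" using hh_pos[OF m] .
  have vj: "\<bar>v j\<bar> \<le> 1" if "j < m" for j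
    using abs_le_L2_set[of "{..<m}" j v] that v by auto
  have sq: "sqrt (real m) \<le> real m"
  proof -
    have "1 \<le> sqrt (real m)" using m by simp
    then have "sqrt (real m) * 1 \<le> sqrt (real m) * sqrt (real m)" by (intro mult_left_mono) auto
    then show ?thesis by simp
  qed
  show "rd m v \<in> grid m"
    unfolding grid_def rd_def
  proof (rule PiE_I)
    fix j assume j: "j \<in> {..<m}"
    let ?k = "\<lfloor>v j / hh m\<rfloor>"
    have "\<bar>v j / hh m\<bar> \<le> 4 * sqrt (real m)"
      using vj[of j] j h by (simp add: hh_def abs_divide abs_mult mult_left_le_one_le)
    then have b: "\<bar>v j / hh m\<bar> \<le> 4 * real m" using sq by linarith
    have "?k \<le> 4 * int m + 1" using b by linarith
    moreover have "?k \<ge> -(4 * int m + 1)" using b by linarith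
    ultimately show "restrict (\<lambda>j. real_of_int \<lfloor>v j / hh m\<rfloor> * hh m) {..<m} j
        \<in> (\<lambda>k. real_of_int k * hh m) ` {-(4 * int m + 1)..4 * int m + 1}"
      using j by auto
  qed auto
  have dj: "0 \<le> v j - rd m v j \<and> v j - rd m v j \<le> hh m" if "j < m" for j
  proof -
    have "real_of_int \<lfloor>v j / hh m\<rfloor> \<le> v j / hh m" by (rule of_int_floor_le)
    then have a: "real_of_int \<lfloor>v j / hh m\<rfloor> * hh m \<le> v j" using pos_le_divide_eq[OF h] by blast
    have "v j / hh m < real_of_int \<lfloor>v j / hh m\<rfloor> + 1" by (rule real_of_int_floor_add_one_gt)
    then have b: "v j < (real_of_int \<lfloor>v j / hh m\<rfloor> + 1) * hh m" using pos_divide_less_eq[OF h] by blast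
    show ?thesis using a b that by (simp add: rd_def algebra_simps)
  qed
  have "nrm m (\<lambda>j. v j - rd m v j) \<le> L2_set (\<lambda>j. hh m) {..<m}"
    by (rule L2_set_mono) (use dj in auto)
  also have "\<dots> = sqrt (real m) * hh m" using h by (simp add: L2_set_constant)
  also have "\<dots> = 1 / 4" using m unfolding hh_def by simp
  finally show d: "nrm m (\<lambda>j. v j - rd m v j) \<le> 1 / 4" .
  have "nrm m (rd m v) = nrm m (\<lambda>j. v j + (- (v j - rd m v j)))" by (rule L2_set_cong) auto
  also have "\<dots> \<le> nrm m v + nrm m (\<lambda>j. - (v j - rd m v j))" by (rule L2_set_triangle_ineq)
  also have "nrm m (\<lambda>j. - (v j - rd m v j)) = nrm m (\<lambda>j. v j - rd m v j)"
    unfolding L2_set_def by (simp add: power2_commute)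
  finally show "nrm m (rd m v) \<le> 5 / 4" using d v by simp
qed

lemma bil_hom:
  assumes S: "S \<ge> 0" and H: "\<And>u v. nrm m u \<le> 1 \<Longrightarrow> nrm m v \<le> 1 \<Longrightarrow> bil m G u v \<le> S"
  shows "bil m G u v \<le> S * nrm m u * nrm m v"
proof (cases "nrm m u = 0 \<or> nrm m v = 0")
  case True
  then have "bil m G u v = 0"
    by (elim disjE) (auto simp: bil_def dest: nrm_zero intro!: sum.neutral)
  then show ?thesis using S by (simp add: mult_nonneg_nonneg)
next
  case False
  define a where "a = nrm m u"
  define b where "b = nrm m v"
  have a: "a > 0" and b: "b > 0" using False L2_set_nonneg[of u "{..<m}"] L2_set_nonneg[of v "{..<m}"]
    unfolding a_def b_def by linarith+
  have "nrm m (\<lambda>i. (1 / a) * u i) = (1 / a) * a" using a by (subst nrm_scale) (auto simp: a_def)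
  moreover have "nrm m (\<lambda>i. (1 / b) * v i) = (1 / b) * b" using b by (subst nrm_scale) (auto simp: b_def)
  ultimately have "bil m G (\<lambda>i. (1 / a) * u i) (\<lambda>i. (1 / b) * v i) \<le> S" using a b by (intro H) auto
  then have "(1 / a) * ((1 / b) * bil m G u v) \<le> S" by (simp only: bil_scale1 bil_scale2)
  then have "bil m G u v / (a * b) \<le> S" by simp
  then have "bil m G u v \<le> S * (a * b)" using a b by (simp add: pos_divide_le_eq)
  then show ?thesis by (simp add: a_def b_def mult.assoc)
qed

lemma mm3:
  fixes t a b A B :: real
  assumes "0 \<le> t" "0 \<le> a" "0 \<le> b" "a \<le> A" "b \<le> B"
  shows "t * a * b \<le> t * A * B"
proof -
  have "t * a \<le> t * A" using assms by (intro mult_left_mono) auto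
  moreover have "0 \<le> t * A" using assms by simp
  ultimately show ?thesis using assms by (intro mult_mono) auto
qed

lemma net_opb:
  assumes m: "m > 0" and tau: "\<tau> \<ge> 0"
    and H: "\<And>u v. u \<in> grid m \<Longrightarrow> v \<in> grid m \<Longrightarrow> bil m G u v \<le> \<tau> * nrm m u * nrm m v"
  shows "opb m G (4 * \<tau>)"
proof -
  define F where "F = sqrt (\<Sum>i<m. \<Sum>j<m. (G i j)\<^sup>2)"
  have F0: "F \<ge> 0" unfolding F_def by (simp add: sum_nonneg)
  define BS where "BS = {bil m G u v | u v. nrm m u \<le> 1 \<and> nrm m v \<le> 1}"
  have bdd: "bdd_above BS"
  proof (rule bdd_aboveI)
    fix x assume "x \<in> BS"
    then obtain u v where x: "x = bil m G u v" and u: "nrm m u \<le> 1" and v: "nrm m v \<le> 1"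
      unfolding BS_def by auto
    have "x \<le> F * nrm m u * nrm m v" using bil_frob x unfolding F_def by simp
    also have "\<dots> \<le> F * 1 * 1"
      using u v F0 by (intro mult_mono) auto
    finally show "x \<le> F" by simp
  qed
  have z: "0 \<in> BS" unfolding BS_def
    by (rule CollectI, rule exI[of _ "\<lambda>_. 0"], rule exI[of _ "\<lambda>_. 0"]) (simp add: bil_def L2_set_def)
  define S where "S = Sup BS"
  have S0: "S \<ge> 0" unfolding S_def using z bdd by (rule cSup_upper)
  have Sup: "bil m G u v \<le> S" if "nrm m u \<le> 1" "nrm m v \<le> 1" for u v
    unfolding S_def using bdd by (rule cSup_upper[rotated]) (use that in \<open>auto simp: BS_def\<close>)
  have hom: "bil m G u v \<le> S * nrm m u * nrm m v" for u v
    by (rule bil_hom[OF S0 Sup])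
  have key: "x \<le> 25 / 16 * \<tau> + 9 / 16 * S" if xin: "x \<in> BS" for x
  proof -
    obtain u v where x: "x = bil m G u v" and u: "nrm m u \<le> 1" and v: "nrm m v \<le> 1"
      using xin unfolding BS_def by blast
    let ?u = "rd m u" let ?v = "rd m v"
    note ru = rd_props[OF m u] and rv = rd_props[OF m v]
    have dec: "bil m G u v = bil m G ?u ?v + bil m G (\<lambda>i. u i - ?u i) v + bil m G ?u (\<lambda>i. v i - ?v i)"
      by (simp add: bil_diff1 bil_diff2)
    have t1: "bil m G ?u ?v \<le> \<tau> * (5/4) * (5/4)"
      using H[OF ru(1) rv(1)] mm3[OF tau L2_set_nonneg L2_set_nonneg ru(3) rv(3)] by linarith
    have t2: "bil m G (\<lambda>i. u i - ?u i) v \<le> S * (1/4) * 1"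
      using hom[of "\<lambda>i. u i - ?u i" v] mm3[OF S0 L2_set_nonneg L2_set_nonneg ru(2) v] by linarith
    have t3: "bil m G ?u (\<lambda>i. v i - ?v i) \<le> S * (5/4) * (1/4)"
      using hom[of ?u "\<lambda>i. v i - ?v i"] mm3[OF S0 L2_set_nonneg L2_set_nonneg ru(3) rv(2)] by linarith
    show ?thesis using dec t1 t2 t3 x by linarith
  qed
  have "S \<le> 25 / 16 * \<tau> + 9 / 16 * S"
    unfolding S_def using z key[unfolded S_def] by (intro cSup_least) auto
  then have S4: "S \<le> 4 * \<tau>" using tau by linarith
  show ?thesis unfolding opb_def
  proof
    fix v
    let ?w = "\<lambda>i. \<Sum>j<m. G i j * v j"
    have "(nrm m ?w)\<^sup>2 = bil m G ?w v"
      unfolding L2_set_sq bil_row by (simp add: power2_eq_square)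
    also have "\<dots> \<le> S * nrm m ?w * nrm m v" by (rule hom)
    also have "\<dots> \<le> (4 * \<tau>) * nrm m ?w * nrm m v"
      using S4 by (intro mult_right_mono) auto
    finally have *: "nrm m ?w * nrm m ?w \<le> (4 * \<tau> * nrm m v) * nrm m ?w"
      by (simp add: power2_eq_square mult_ac)
    show "nrm m ?w \<le> 4 * \<tau> * nrm m v"
    proof (cases "nrm m ?w = 0")
      case True then show ?thesis using tau by simp
    next
      case False
      then have "nrm m ?w > 0" using L2_set_nonneg[of ?w "{..<m}"] by linarith
      with * show ?thesis by (rule mult_right_le_imp_le)
    qed
  qed
qed



abbreviation NN :: "real measure" where "NN \<equiv> density lborel std_normal_density"

lemma mgf_density_eq: "std_normal_density y * exp (c * y) = exp (c\<^sup>2 / 2) * normal_density c 1 y"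
proof -
  have "- y\<^sup>2 / 2 + c * y = c\<^sup>2 / 2 + (- (y - c)\<^sup>2 / 2)" by (simp add: power2_eq_square field_simps)
  then show ?thesis unfolding normal_density_def by (simp add: exp_add[symmetric] mult_ac)
qed

lemma mgf_std: "(\<integral>\<^sup>+ y. ennreal (exp (c * y)) \<partial>NN) = ennreal (exp (c\<^sup>2 / 2))"
proof -
  have "(\<integral>\<^sup>+ y. ennreal (exp (c * y)) \<partial>NN) = (\<integral>\<^sup>+ y. ennreal (std_normal_density y) * ennreal (exp (c * y)) \<partial>lborel)"
    by (rule nn_integral_density) auto
  also have "\<dots> = (\<integral>\<^sup>+ y. ennreal (exp (c\<^sup>2 / 2)) * ennreal (normal_density c 1 y) \<partial>lborel)"
    by (simp add: ennreal_mult'[symmetric] mgf_density_eq)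
  also have "\<dots> = ennreal (exp (c\<^sup>2 / 2)) * (\<integral>\<^sup>+ y. ennreal (normal_density c 1 y) \<partial>lborel)"
    by (rule nn_integral_cmult) auto
  also have "(\<integral>\<^sup>+ y. ennreal (normal_density c 1 y) \<partial>lborel) = 1"
    by (subst nn_integral_eq_integral) auto
  finally show ?thesis by simp
qed

lemma prob_NN: "prob_space NN" by (rule prob_space_normal_density) simp

lemma prob_PiNN: "prob_space (PiM I (\<lambda>_. NN))" by (rule prob_space_PiM) (rule prob_NN)

lemma mgf_sum:
  assumes I: "finite I"
  shows "(\<integral>\<^sup>+ g. ennreal (exp (\<Sum>x\<in>I. a x * g x)) \<partial>PiM I (\<lambda>_. NN)) = ennreal (exp ((\<Sum>x\<in>I. (a x)\<^sup>2) / 2))"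
proof -
  interpret P: product_sigma_finite "\<lambda>_. NN"
    unfolding product_sigma_finite_def using prob_space_imp_sigma_finite[OF prob_NN] by simp
  have "(\<integral>\<^sup>+ g. ennreal (exp (\<Sum>x\<in>I. a x * g x)) \<partial>PiM I (\<lambda>_. NN))
      = (\<integral>\<^sup>+ g. (\<Prod>x\<in>I. (\<lambda>x y. ennreal (exp (a x * y))) x (g x)) \<partial>PiM I (\<lambda>_. NN))"
    using I by (intro nn_integral_cong) (simp add: exp_sum prod_ennreal)
  also have "\<dots> = (\<Prod>x\<in>I. \<integral>\<^sup>+ y. ennreal (exp (a x * y)) \<partial>NN)"
    by (rule P.product_nn_integral_prod[OF I]) auto
  also have "\<dots> = (\<Prod>x\<in>I. ennreal (exp ((a x)\<^sup>2 / 2)))"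
    by (simp add: mgf_std)
  also have "\<dots> = ennreal (exp ((\<Sum>x\<in>I. (a x)\<^sup>2) / 2))"
    using I by (simp add: prod_ennreal exp_sum sum_divide_distrib)
  finally show ?thesis .
qed

lemma tail_bound:
  assumes I: "finite I" and tau: "\<tau> \<ge> 0"
  shows "measure (PiM I (\<lambda>_. NN)) {g \<in> space (PiM I (\<lambda>_. NN)). (\<Sum>x\<in>I. a x * g x) > \<tau> * sqrt (\<Sum>x\<in>I. (a x)\<^sup>2)}
    \<le> exp (- \<tau>\<^sup>2 / 2)"
proof -
  let ?M = "PiM I (\<lambda>_. NN)"
  interpret P: prob_space ?M by (rule prob_PiNN)
  define s where "s = sqrt (\<Sum>x\<in>I. (a x)\<^sup>2)"
  let ?A = "{g \<in> space ?M. (\<Sum>x\<in>I. a x * g x) > \<tau> * s}"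
  have Ameas: "?A \<in> sets ?M" by measurable
  show ?thesis
  proof (cases "s = 0")
    case True
    then have "\<forall>x\<in>I. a x = 0" unfolding s_def using I by (simp add: sum_nonneg_eq_0_iff)
    then have "?A = {}" using True by simp
    then show ?thesis by (simp only: s_def[symmetric]) simp
  next
    case False
    have "0 \<le> (\<Sum>x\<in>I. (a x)\<^sup>2)" by (simp add: sum_nonneg)
    then have s: "s > 0" using False unfolding s_def by simp
    define lam where "lam = \<tau> / s"
    have lam: "lam \<ge> 0" unfolding lam_def using s tau by simp
    have "emeasure ?M ?A = (\<integral>\<^sup>+ g. indicator ?A g \<partial>?M)" using Ameas by simp
    also have "\<dots> \<le> (\<integral>\<^sup>+ g. ennreal (exp (- lam * \<tau> * s)) * ennreal (exp (\<Sum>x\<in>I. (lam * a x) * g x)) \<partial>?M)"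
    proof (rule nn_integral_mono)
      fix g
      show "indicator ?A g \<le> ennreal (exp (- lam * \<tau> * s)) * ennreal (exp (\<Sum>x\<in>I. (lam * a x) * g x))"
      proof (cases "g \<in> ?A")
        case True
        then have "lam * (\<tau> * s) \<le> lam * (\<Sum>x\<in>I. a x * g x)" using lam by (intro mult_left_mono) auto
        then have "0 \<le> - lam * \<tau> * s + (\<Sum>x\<in>I. (lam * a x) * g x)"
          by (simp add: sum_distrib_left mult_ac)
        then have "1 \<le> exp (- lam * \<tau> * s) * exp (\<Sum>x\<in>I. (lam * a x) * g x)"
          by (simp add: exp_add[symmetric])
        then show ?thesis using True by (simp add: ennreal_mult'[symmetric])
      qed simp
    qed
    also have "\<dots> = ennreal (exp (- lam * \<tau> * s)) * (\<integral>\<^sup>+ g. ennreal (exp (\<Sum>x\<in>I. (lam * a x) * g x)) \<partial>?M)"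
      by (rule nn_integral_cmult) measurable
    also have "\<dots> = ennreal (exp (- lam * \<tau> * s)) * ennreal (exp ((\<Sum>x\<in>I. (lam * a x)\<^sup>2) / 2))"
      by (simp add: mgf_sum[OF I])
    also have "(\<Sum>x\<in>I. (lam * a x)\<^sup>2) = lam\<^sup>2 * s\<^sup>2"
      unfolding s_def by (simp add: power_mult_distrib sum_distrib_left sum_nonneg)
    also have "ennreal (exp (- lam * \<tau> * s)) * ennreal (exp (lam\<^sup>2 * s\<^sup>2 / 2)) = ennreal (exp (- \<tau>\<^sup>2 / 2))"
    proof -
      have "- lam * \<tau> * s + lam\<^sup>2 * s\<^sup>2 / 2 = - \<tau>\<^sup>2 / 2"
        unfolding lam_def using s by (simp add: power2_eq_square field_simps)
      then show ?thesis by (simp add: ennreal_mult'[symmetric] exp_add[symmetric])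
    qed
    finally have "emeasure ?M ?A \<le> ennreal (exp (- \<tau>\<^sup>2 / 2))" .
    then show ?thesis unfolding s_def P.emeasure_eq_measure by simp
  qed
qed



lemma finite_I: "finite (init_index L n m)"
proof -
  have "init_index L n m \<subseteq> UNIV \<times> {1..L} \<times> {..<m} \<times> {..<n + m}"
    unfolding init_index_def by auto
  moreover have "finite (UNIV \<times> {1..L} \<times> {..<m} \<times> {..<n + m} :: (bool \<times> nat \<times> nat \<times> nat) set)"
    by simp
  ultimately show ?thesis by (rule finite_subset)
qed

lemma sum_I:
  assumes k: "k \<in> {1..L}"
    and f: "\<And>x. x \<in> init_index L n m \<Longrightarrow> f x \<noteq> 0 \<Longrightarrow> \<exists>i j. i < m \<and> j < m \<and> x = (False, k, i, j)"
  shows "(\<Sum>x\<in>init_index L n m. f x) = (\<Sum>i<m. \<Sum>j<m. f (False, k, i, j))"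
proof -
  define J where "J = (\<lambda>(i, j). (False, k, i, j)) ` ({..<m} \<times> {..<m})"
  have JI: "J \<subseteq> init_index L n m" using k unfolding J_def init_index_def by auto
  have "(\<Sum>x\<in>init_index L n m. f x) = (\<Sum>x\<in>J. f x)"
  proof (rule sum.mono_neutral_right[OF finite_I JI])
    show "\<forall>x\<in>init_index L n m - J. f x = 0"
    proof
      fix x assume x: "x \<in> init_index L n m - J"
      show "f x = 0"
      proof (rule ccontr)
        assume "f x \<noteq> 0"
        then obtain i j where "i < m" "j < m" "x = (False, k, i, j)" using f x by blast
        then have "x \<in> J" unfolding J_def by auto
        then show False using x by simp
      qed
    qed
  qed
  also have "\<dots> = (\<Sum>p\<in>{..<m} \<times> {..<m}. f (False, k, fst p, snd p))"
    unfolding J_def by (subst sum.reindex) (auto simp: inj_on_def case_prod_beta)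
  also have "\<dots> = (\<Sum>i<m. \<Sum>j<m. f (False, k, i, j))"
    by (simp add: sum.cartesian_product case_prod_beta)
  finally show ?thesis .
qed

definition coef :: "nat \<Rightarrow> nat \<Rightarrow> (nat \<Rightarrow> real) \<Rightarrow> (nat \<Rightarrow> real) \<Rightarrow> bool \<times> nat \<times> nat \<times> nat \<Rightarrow> real" where
  "coef m k u v x = (case x of (b, k', i, j) \<Rightarrow> if \<not> b \<and> k' = k \<and> i < m \<and> j < m then u i * v j else 0)"

lemma coef_sum:
  assumes k: "k \<in> {1..L}"
  shows "(\<Sum>x\<in>init_index L n m. coef m k u v x * g x) = bil m (\<lambda>i j. g (False, k, i, j)) u v"
proof -
  have "(\<Sum>x\<in>init_index L n m. coef m k u v x * g x) = (\<Sum>i<m. \<Sum>j<m. coef m k u v (False, k, i, j) * g (False, k, i, j))"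
    by (rule sum_I[OF k]) (auto simp: coef_def split: if_splits)
  also have "\<dots> = bil m (\<lambda>i j. g (False, k, i, j)) u v"
    unfolding bil_def coef_def by (intro sum.cong) auto
  finally show ?thesis .
qed

lemma coef_sq:
  assumes k: "k \<in> {1..L}"
  shows "sqrt (\<Sum>x\<in>init_index L n m. (coef m k u v x)\<^sup>2) = nrm m u * nrm m v"
proof -
  have "(\<Sum>x\<in>init_index L n m. (coef m k u v x)\<^sup>2) = (\<Sum>i<m. \<Sum>j<m. (coef m k u v (False, k, i, j))\<^sup>2)"
    by (rule sum_I[OF k]) (auto simp: coef_def split: if_splits)
  also have "\<dots> = (\<Sum>i<m. \<Sum>j<m. (u i)\<^sup>2 * (v j)\<^sup>2)"
    unfolding coef_def by (intro sum.cong) (auto simp: power_mult_distrib)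
  also have "\<dots> = (\<Sum>i<m. (u i)\<^sup>2) * (\<Sum>j<m. (v j)\<^sup>2)"
    by (simp add: sum_product)
  finally show ?thesis unfolding L2_set_def by (simp add: real_sqrt_mult)
qed

lemma card_grid: "card (grid m) \<le> (8 * m + 3) ^ m"
proof -
  have "card (grid m) = (\<Prod>i<m. card ((\<lambda>k. real_of_int k * hh m) ` {-(4 * int m + 1)..4 * int m + 1}))"
    unfolding grid_def by (simp add: card_PiE)
  also have "\<dots> \<le> (\<Prod>i<m. 8 * m + 3)"
  proof (rule prod_mono)
    fix i
    have "card ((\<lambda>k. real_of_int k * hh m) ` {-(4 * int m + 1)..4 * int m + 1}) \<le> card {-(4 * int m + 1)..4 * int m + 1}"
      by (rule card_image_le) simp
    also have "\<dots> = 8 * m + 3" by simp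
    finally show "0 \<le> card ((\<lambda>k. real_of_int k * hh m) ` {-(4 * int m + 1)..4 * int m + 1}) \<and>
      card ((\<lambda>k. real_of_int k * hh m) ` {-(4 * int m + 1)..4 * int m + 1}) \<le> 8 * m + 3" by simp
  qed
  finally show ?thesis by simp
qed

lemma finite_grid: "finite (grid m)"
  unfolding grid_def by (intro finite_PiE) auto

lemma matvec_frob: "nrm m (\<lambda>i. \<Sum>j<m. D i j * v j) \<le> sqrt (\<Sum>i<m. \<Sum>j<m. (D i j)\<^sup>2) * nrm m v"
proof -
  let ?w = "\<lambda>i. \<Sum>j<m. D i j * v j"
  have wi: "\<bar>?w i\<bar> \<le> L2_set (D i) {..<m} * nrm m v" for i
  proof -
    have "\<bar>?w i\<bar> \<le> (\<Sum>j<m. \<bar>D i j\<bar> * \<bar>v j\<bar>)"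
      by (rule order_trans[OF sum_abs]) (simp add: abs_mult)
    also have "\<dots> \<le> L2_set (D i) {..<m} * nrm m v" by (rule L2_set_mult_ineq)
    finally show ?thesis .
  qed
  have "nrm m ?w \<le> L2_set (\<lambda>i. L2_set (D i) {..<m} * nrm m v) {..<m}"
    by (subst L2_set_abs[symmetric]) (rule L2_set_mono, use wi in auto)
  also have "\<dots> = L2_set (\<lambda>i. L2_set (D i) {..<m}) {..<m} * nrm m v"
    by (simp add: L2_set_left_distrib)
  also have "L2_set (\<lambda>i. L2_set (D i) {..<m}) {..<m} = sqrt (\<Sum>i<m. \<Sum>j<m. (D i j)\<^sup>2)"
    unfolding L2_set_def by (simp add: sum_nonneg)
  finally show ?thesis .
qed

lemma opb_perturb:
  assumes "opb m G B" and R: "sqrt (\<Sum>i<m. \<Sum>j<m. (W i j - G i j)\<^sup>2) \<le> R"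
  shows "opb m W (B + R)"
  unfolding opb_def
proof
  fix v
  have "nrm m (\<lambda>i. \<Sum>j<m. W i j * v j) = nrm m (\<lambda>i. (\<Sum>j<m. G i j * v j) + (\<Sum>j<m. (W i j - G i j) * v j))"
    by (rule L2_set_cong) (auto simp: algebra_simps sum.distrib[symmetric])
  also have "\<dots> \<le> nrm m (\<lambda>i. \<Sum>j<m. G i j * v j) + nrm m (\<lambda>i. \<Sum>j<m. (W i j - G i j) * v j)"
    by (rule L2_set_triangle_ineq)
  also have "\<dots> \<le> B * nrm m v + R * nrm m v"
  proof (rule add_mono)
    show "nrm m (\<lambda>i. \<Sum>j<m. G i j * v j) \<le> B * nrm m v" using assms(1) unfolding opb_def by blast
    have "nrm m (\<lambda>i. \<Sum>j<m. (W i j - G i j) * v j) \<le> sqrt (\<Sum>i<m. \<Sum>j<m. (W i j - G i j)\<^sup>2) * nrm m v"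
      by (rule matvec_frob)
    also have "\<dots> \<le> R * nrm m v" using R by (intro mult_right_mono) auto
    finally show "nrm m (\<lambda>i. \<Sum>j<m. (W i j - G i j) * v j) \<le> R * nrm m v" .
  qed
  finally show "nrm m (\<lambda>i. \<Sum>j<m. W i j * v j) \<le> (B + R) * nrm m v" by (simp add: algebra_simps)
qed

lemma opb_mono: "opb m W B \<Longrightarrow> B \<le> B' \<Longrightarrow> opb m W B'"
  unfolding opb_def by (meson L2_set_nonneg mult_right_mono order_trans)

lemma layer_le_dist:
  assumes k: "k \<in> {1..L}"
  shows "sqrt (\<Sum>i<m. \<Sum>j<m. (W2 k i j - G k i j)\<^sup>2) \<le> dist_W2 L m W2 G"
  unfolding dist_W2_def
proof (rule real_sqrt_le_mono)
  show "(\<Sum>i<m. \<Sum>j<m. (W2 k i j - G k i j)\<^sup>2) \<le> (\<Sum>l\<in>{1..L}. \<Sum>i<m. \<Sum>j<m. (W2 l i j - G l i j)\<^sup>2)"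
    using k by (intro member_le_sum) (auto intro!: sum_nonneg)
qed



definition tauf :: "nat \<Rightarrow> real" where
  "tauf m = sqrt (4 * real m * ln (8 * real m + 3) + 2 * real m)"

lemma good_event:
  assumes m: "m > 0"
  shows "\<exists>E \<in> sets (init_measure L n m). measure (init_measure L n m) E \<ge> 1 - real L * exp (- real m) \<and>
      E \<subseteq> {g. \<forall>k\<in>{1..L}. opb m (W2_of g k) (4 * tauf m)}"
proof -
  define I where "I = init_index L n m"
  define M where "M = PiM I (\<lambda>_. NN)"
  have MM: "init_measure L n m = M" unfolding M_def I_def init_measure_def by simp
  interpret P: prob_space M unfolding M_def by (rule prob_PiNN)
  define \<tau> where "\<tau> = tauf m"
  have lnX: "ln (8 * real m + 3) \<ge> 0" by simp
  have tau0: "\<tau> \<ge> 0" unfolding \<tau>_def tauf_def by simp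
  have tausq: "\<tau>\<^sup>2 = 4 * real m * ln (8 * real m + 3) + 2 * real m"
    unfolding \<tau>_def tauf_def using lnX by simp
  define Bad where "Bad = (\<lambda>(k, u, v). {g \<in> space M. (\<Sum>x\<in>I. coef m k u v x * g x) > \<tau> * sqrt (\<Sum>x\<in>I. (coef m k u v x)\<^sup>2)})"
  define Pset where "Pset = {1..L} \<times> grid m \<times> grid m"
  define E where "E = space M - (\<Union>p\<in>Pset. Bad p)"
  have finP: "finite Pset" unfolding Pset_def using finite_grid by simp
  have Bmeas: "Bad p \<in> sets M" for p
    unfolding Bad_def M_def by (cases p) (simp, measurable)
  have Umeas: "(\<Union>p\<in>Pset. Bad p) \<in> sets M" using finP Bmeas by auto
  have Emeas: "E \<in> sets M" unfolding E_def using Umeas by auto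
  have Bbound: "measure M (Bad p) \<le> exp (- \<tau>\<^sup>2 / 2)" for p
  proof -
    obtain k u v where p: "p = (k, u, v)" by (cases p)
    show ?thesis unfolding p Bad_def M_def I_def prod.case by (rule tail_bound[OF finite_I tau0])
  qed
  have "measure M (\<Union>p\<in>Pset. Bad p) \<le> (\<Sum>p\<in>Pset. measure M (Bad p))"
    by (rule measure_UNION_le[OF finP Bmeas])
  also have "\<dots> \<le> real (card Pset) * exp (- \<tau>\<^sup>2 / 2)"
    by (rule sum_bounded_above) (rule Bbound)
  also have "\<dots> \<le> real L * exp (- real m)"
  proof -
    define X where "X = 8 * real m + 3"
    have X: "X > 0" unfolding X_def by simp
    have "card Pset = L * (card (grid m) * card (grid m))"
      unfolding Pset_def by (simp add: card_cartesian_product)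
    also have "\<dots> \<le> L * ((8 * m + 3) ^ m * (8 * m + 3) ^ m)"
      using card_grid[of m] by (intro mult_le_mono2 mult_le_mono) auto
    finally have "real (card Pset) \<le> real (L * ((8 * m + 3) ^ m * (8 * m + 3) ^ m))"
      by (simp only: of_nat_le_iff)
    also have "real (L * ((8 * m + 3) ^ m * (8 * m + 3) ^ m)) = real L * (X ^ m * X ^ m)"
      unfolding X_def by simp
    finally have "real (card Pset) \<le> real L * (X ^ m * X ^ m)" .
    then have c: "real (card Pset) \<le> real L * X ^ (2 * m)" by (simp add: power_add[symmetric] mult_2)
    have e: "exp (- \<tau>\<^sup>2 / 2) = exp (- real m) / X ^ (2 * m)"
    proof -
      have "exp (real (2 * m) * ln X) = X ^ (2 * m)" using X exp_of_nat_mult[of "2 * m" "ln X"] by simp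
      moreover have "- \<tau>\<^sup>2 / 2 = - real m - real (2 * m) * ln X" unfolding tausq X_def by simp
      ultimately show ?thesis by (simp add: exp_diff)
    qed
    have "real (card Pset) * exp (- \<tau>\<^sup>2 / 2) \<le> real L * X ^ (2 * m) * (exp (- real m) / X ^ (2 * m))"
      unfolding e using c by (intro mult_right_mono) auto
    also have "\<dots> = real L * exp (- real m)" using X by simp
    finally show ?thesis .
  qed
  finally have U: "measure M (\<Union>p\<in>Pset. Bad p) \<le> real L * exp (- real m)" .
  have "measure M E = 1 - measure M (\<Union>p\<in>Pset. Bad p)"
    unfolding E_def by (rule P.prob_compl[OF Umeas])
  then have meas: "measure M E \<ge> 1 - real L * exp (- real m)" using U by simp
  have sub: "E \<subseteq> {g. \<forall>k\<in>{1..L}. opb m (W2_of g k) (4 * tauf m)}"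
  proof (intro subsetI CollectI ballI)
    fix g k assume g: "g \<in> E" and k: "k \<in> {1..L}"
    have "bil m (\<lambda>i j. g (False, k, i, j)) u v \<le> \<tau> * nrm m u * nrm m v" if u: "u \<in> grid m" and v: "v \<in> grid m" for u v
    proof -
      have "(k, u, v) \<in> Pset" unfolding Pset_def using k u v by auto
      then have "g \<notin> Bad (k, u, v)" using g unfolding E_def by auto
      moreover have "g \<in> space M" using g unfolding E_def by auto
      ultimately have "\<not> (\<Sum>x\<in>I. coef m k u v x * g x) > \<tau> * sqrt (\<Sum>x\<in>I. (coef m k u v x)\<^sup>2)"
        unfolding Bad_def by auto
      then show ?thesis unfolding I_def coef_sum[OF k] coef_sq[OF k] by (simp add: mult.assoc)
    qed
    then have "opb m (\<lambda>i j. g (False, k, i, j)) (4 * \<tau>)" by (intro net_opb[OF m tau0]) auto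
    moreover have "W2_of g k = (\<lambda>i j. g (False, k, i, j))" by (simp add: W2_of_def fun_eq_iff)
    ultimately show "opb m (W2_of g k) (4 * tauf m)" unfolding \<tau>_def by simp
  qed
  show ?thesis unfolding MM using Emeas meas sub by blast
qed



lemma sqrt_le_self': "1 \<le> x \<Longrightarrow> sqrt x \<le> (x::real)"
proof -
  assume x: "1 \<le> x"
  have "1 \<le> sqrt x" using x by simp
  then have "sqrt x * 1 \<le> sqrt x * sqrt x" by (intro mult_left_mono) auto
  then show ?thesis using x by simp
qed

lemma ln_ge1: "m \<ge> 3 \<Longrightarrow> 1 \<le> ln (real m)"
proof -
  assume m: "m \<ge> 3"
  have "exp 1 \<le> real m" using exp_le m by linarith
  then have "ln (exp 1) \<le> ln (real m)" using m by (subst ln_le_cancel_iff) auto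
  then show ?thesis by simp
qed

lemma B_bound:
  assumes m: "m \<ge> 3" and R: "R2 \<ge> 0"
  shows "(4 * tauf m + R2) / sqrt (real m) \<le> (56 + \<bar>R2\<bar>) * ln (real m)"
proof -
  have lnm: "1 \<le> ln (real m)" by (rule ln_ge1[OF m])
  have mpos: "real m > 0" using m by simp
  have "8 * real m + 3 \<le> real m ^ 3"
  proof -
    have "3 * 3 \<le> real m * real m" using m by (intro mult_mono) auto
    then have a: "9 * real m \<le> real m * real m * real m" using m by (intro mult_right_mono) auto
    have b: "8 * real m + 3 \<le> 9 * real m" using m by simp
    show ?thesis unfolding power3_eq_cube using a b by linarith
  qed
  then have "ln (8 * real m + 3) \<le> ln (real m ^ 3)" using m by (subst ln_le_cancel_iff) auto
  also have "\<dots> = 3 * ln (real m)" using mpos by (simp add: ln_realpow)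
  finally have l8: "ln (8 * real m + 3) \<le> 3 * ln (real m)" .
  have "tauf m = sqrt (real m * (4 * ln (8 * real m + 3) + 2))"
    unfolding tauf_def by (simp add: algebra_simps)
  also have "\<dots> = sqrt (real m) * sqrt (4 * ln (8 * real m + 3) + 2)" by (simp add: real_sqrt_mult)
  finally have tm: "tauf m / sqrt (real m) = sqrt (4 * ln (8 * real m + 3) + 2)" using mpos by simp
  have "sqrt (4 * ln (8 * real m + 3) + 2) \<le> sqrt (14 * ln (real m))"
    using l8 lnm by (intro real_sqrt_le_mono) linarith
  also have "\<dots> \<le> 14 * ln (real m)" using lnm by (intro sqrt_le_self') linarith
  finally have t: "4 * (tauf m / sqrt (real m)) \<le> 56 * ln (real m)" unfolding tm by linarith
  have sm: "sqrt (real m) \<ge> 1" using m by simp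
  have "R2 / sqrt (real m) \<le> R2" using R sm by (simp add: divide_le_eq mult_le_cancel_left1 order_trans[OF _ mult_right_mono])
  also have "\<dots> \<le> \<bar>R2\<bar> * ln (real m)" using R lnm by (simp add: mult_le_cancel_left1)
  finally have r: "R2 / sqrt (real m) \<le> \<bar>R2\<bar> * ln (real m)" .
  have "(4 * tauf m + R2) / sqrt (real m) = 4 * (tauf m / sqrt (real m)) + R2 / sqrt (real m)"
    by (simp add: add_divide_distrib)
  also have "\<dots> \<le> 56 * ln (real m) + \<bar>R2\<bar> * ln (real m)" using t r by linarith
  also have "\<dots> = (56 + \<bar>R2\<bar>) * ln (real m)" by (simp add: algebra_simps)
  finally show ?thesis .
qed

theorem lemma8:
  fixes L n :: nat and lam Cy Cx R1 R2 :: real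
  assumes "lam > 0"
  shows "\<exists>(C::real) (k::nat) (\<delta>::nat \<Rightarrow> real) (M0::nat). \<delta> \<longlonglongrightarrow> 0 \<and>
    (\<forall>m \<ge> M0. \<forall>(y::nat \<Rightarrow> real) (x0::nat \<Rightarrow> real).
      (\<forall>i<n. \<bar>y i\<bar> \<le> Cy) \<longrightarrow> (\<forall>i<m. \<bar>x0 i\<bar> \<le> Cx) \<longrightarrow>
      (\<exists>E \<in> sets (init_measure L n m).
         measure (init_measure L n m) E \<ge> 1 - \<delta> m \<and>
         E \<subseteq> {g. \<forall>W1 W2. dist_W1 L n m W1 (W1_of g) \<le> R1 \<longrightarrow> dist_W2 L m W2 (W2_of g) \<le> R2 \<longrightarrow>
               (\<forall>s<m. \<forall>l\<in>{1..L-1}.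
                  vec_dist m (lista_b lam n m L W1 W2 y x0 l s)
                             (lista_b lam n m L (W1_of g) (W2_of g) y x0 l s)
                  \<le> C * (ln (real m)) ^ k / sqrt (real m))}))"
proof -
  have lam: "lam \<ge> 0" using assms by simp
  define c where "c = 56 + \<bar>R2\<bar>"
  have c1: "c \<ge> 1" unfolding c_def by simp
  define \<delta> where "\<delta> = (\<lambda>m. real L * inverse (real (Suc m)))"
  have lim: "\<delta> \<longlonglongrightarrow> 0" unfolding \<delta>_def
    by (rule tendsto_mult_right_zero[OF LIMSEQ_inverse_real_of_nat])
  have main: "\<exists>E \<in> sets (init_measure L n m).
         measure (init_measure L n m) E \<ge> 1 - \<delta> m \<and>
         E \<subseteq> {g. \<forall>W1 W2. dist_W1 L n m W1 (W1_of g) \<le> R1 \<longrightarrow> dist_W2 L m W2 (W2_of g) \<le> R2 \<longrightarrow>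
               (\<forall>s<m. \<forall>l\<in>{1..L-1}.
                  vec_dist m (lista_b lam n m L W1 W2 y x0 l s)
                             (lista_b lam n m L (W1_of g) (W2_of g) y x0 l s)
                  \<le> (2 * c ^ L) * (ln (real m)) ^ L / sqrt (real m))}"
    if m3: "m \<ge> 3" for m y x0
  proof -
    have m: "m > 0" using m3 by simp
    obtain E where Es: "E \<in> sets (init_measure L n m)"
      and Em: "measure (init_measure L n m) E \<ge> 1 - real L * exp (- real m)"
      and Eo: "E \<subseteq> {g. \<forall>k\<in>{1..L}. opb m (W2_of g k) (4 * tauf m)}"
      using good_event[OF m, of L n] by blast
    have "exp (- real m) \<le> inverse (real (Suc m))"
    proof -
      have "1 + real m \<le> exp (real m)" by (rule exp_ge_add_one_self)
      then have "inverse (exp (real m)) \<le> inverse (1 + real m)" by (intro le_imp_inverse_le) auto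
      then show ?thesis by (simp add: exp_minus)
    qed
    then have "real L * exp (- real m) \<le> \<delta> m" unfolding \<delta>_def by (intro mult_left_mono) auto
    then have Em': "measure (init_measure L n m) E \<ge> 1 - \<delta> m" using Em by linarith
    have "E \<subseteq> {g. \<forall>W1 W2. dist_W1 L n m W1 (W1_of g) \<le> R1 \<longrightarrow> dist_W2 L m W2 (W2_of g) \<le> R2 \<longrightarrow>
               (\<forall>s<m. \<forall>l\<in>{1..L-1}.
                  vec_dist m (lista_b lam n m L W1 W2 y x0 l s)
                             (lista_b lam n m L (W1_of g) (W2_of g) y x0 l s)
                  \<le> (2 * c ^ L) * (ln (real m)) ^ L / sqrt (real m))}"
    proof (intro subsetI CollectI allI impI ballI)
      fix g W1 W2 s l
      assume g: "g \<in> E" and d1: "dist_W1 L n m W1 (W1_of g) \<le> R1" and d2: "dist_W2 L m W2 (W2_of g) \<le> R2"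
        and s: "s < m" and l: "l \<in> {1..L-1}"
      have R: "R2 \<ge> 0" using d2 unfolding dist_W2_def by (meson order_trans real_sqrt_ge_zero sum_nonneg zero_le_power2)
      define B where "B = 4 * tauf m + R2"
      have tau0: "tauf m \<ge> 0" unfolding tauf_def by simp
      have B0: "B \<ge> 0" unfolding B_def using R tau0 by simp
      have op0: "opb m (W2_of g k) (4 * tauf m)" if "k \<in> {1..L}" for k using g Eo that by auto
      have opA: "opb m (W2 k) B" if k: "k \<in> {1..L}" for k
        unfolding B_def
        by (rule opb_perturb[OF op0[OF k]]) (rule order_trans[OF layer_le_dist[OF k] d2])
      have opB: "opb m (W2_of g k) B" if k: "k \<in> {1..L}" for k
        using opb_mono[OF op0[OF k]] R unfolding B_def by simp
      have lL: "l \<le> L" using l by auto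
      have nb1: "nrm m (lista_b lam n m L W1 W2 y x0 l s) \<le> (B / sqrt (real m)) ^ (L - l) / sqrt (real m)"
        by (rule b_norm[OF lam m B0 s lL]) (use opA l in auto)
      have nb2: "nrm m (lista_b lam n m L (W1_of g) (W2_of g) y x0 l s) \<le> (B / sqrt (real m)) ^ (L - l) / sqrt (real m)"
        by (rule b_norm[OF lam m B0 s lL]) (use opB l in auto)
      have Bc: "B / sqrt (real m) \<le> c * ln (real m)" unfolding B_def c_def by (rule B_bound[OF m3 R])
      have lnm: "1 \<le> ln (real m)" by (rule ln_ge1[OF m3])
      have cl1: "1 \<le> c * ln (real m)" using c1 lnm
        by (metis mult_mono' mult_1 zero_le_one order_trans)
      have "(B / sqrt (real m)) ^ (L - l) \<le> (c * ln (real m)) ^ (L - l)"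
        using B0 Bc by (intro power_mono) auto
      also have "\<dots> \<le> (c * ln (real m)) ^ L" using cl1 by (intro power_increasing) auto
      also have "\<dots> = c ^ L * (ln (real m)) ^ L" by (simp add: power_mult_distrib)
      finally have P: "(B / sqrt (real m)) ^ (L - l) \<le> c ^ L * (ln (real m)) ^ L" .
      let ?b = "lista_b lam n m L W1 W2 y x0 l s"
      let ?bz = "lista_b lam n m L (W1_of g) (W2_of g) y x0 l s"
      have "vec_dist m ?b ?bz = nrm m (\<lambda>j. ?b j + (- ?bz j))"
        unfolding vec_dist_def L2_set_def by simp
      also have "\<dots> \<le> nrm m ?b + nrm m (\<lambda>j. - ?bz j)" by (rule L2_set_triangle_ineq)
      also have "\<dots> = nrm m ?b + nrm m ?bz" unfolding L2_set_def by simp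
      also have "\<dots> \<le> 2 * ((B / sqrt (real m)) ^ (L - l) / sqrt (real m))"
        using nb1 nb2 by linarith
      also have "\<dots> \<le> 2 * (c ^ L * (ln (real m)) ^ L / sqrt (real m))"
        using P by (intro mult_left_mono divide_right_mono) auto
      also have "\<dots> = (2 * c ^ L) * (ln (real m)) ^ L / sqrt (real m)" by simp
      finally have fin: "vec_dist m ?b ?bz \<le> (2 * c ^ L) * (ln (real m)) ^ L / sqrt (real m)" .
      then show "vec_dist m ?b ?bz \<le> (2 * c ^ L) * (ln (real m)) ^ L / sqrt (real m)" .
    qed
    then show ?thesis using Es Em' by blast
  qed
  show ?thesis
    by (rule exI[of _ "2 * c ^ L"], rule exI[of _ L], rule exI[of _ \<delta>], rule exI[of _ 3])
       (use lim main in auto)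
qed

end
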